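(* Under Assumption A, let $\alpha>0$, let $\boldsymbol z^*\in\mathcal Z$ be any saddle point of $\max_{\boldsymbol\sigma\ge0,\boldsymbol\lambda}\min_{\boldsymbol x\in\mathcal X}\mathcal L$, and for $\boldsymbol z\in\mathcal Z$ put $\boldsymbol y=\boldsymbol z-\alpha\boldsymbol\Omega(\boldsymbol z)$ and $V(\boldsymbol z)=\tfrac12\|\boldsymbol z-\boldsymbol z^*\|^2+\alpha(\boldsymbol z-\mathrm{Proj}_{\mathcal Z}(\boldsymbol y))^\top\boldsymbol\Omega(\boldsymbol z)-\tfrac12\|\boldsymbol z-\mathrm{Proj}_{\mathcal Z}(\boldsymbol y)\|^2$. Then: (A) for all $\boldsymbol z\in\mathcal Z$, $V(\boldsymbol z)\ge\tfrac12\big(\|\boldsymbol z-\mathrm{Proj}_{\mathcal Z}(\boldsymbol y)\|^2+\|\boldsymbol z-\boldsymbol z^*\|^2\big)\ge0$; (B) $V$ is continuously differentiable on $\mathcal Z$ and its derivative along the dynamics $\dot{\boldsymbol z}=\boldsymbol f(\boldsymbol z)=\mathrm{Proj}_{\mathcal Z}(\boldsymbol z-\alpha\boldsymbol\Omega(\boldsymbol z))-\boldsymbol z$ satisfies, for all $\boldsymbol z\in\mathcal Z$, $\frac{dV}{dt}=\nabla V(\boldsymbol z)^\top\boldsymbol f(\boldsymbol z)\le-\alpha(\boldsymbol z-\boldsymbol z^* )^\top\boldsymbol\Omega(\boldsymbol z)\le0$.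
   Context: General problem (GP): minimize $c(\boldsymbol x)$ over $\boldsymbol x\in\mathcal X\subseteq\mathbb R^n$ subject to $\boldsymbol h(\boldsymbol x)=\boldsymbol0$ and $\boldsymbol g(\boldsymbol x)\le\boldsymbol0$, where $c:\mathbb R^n\to\mathbb R$, $\boldsymbol h:\mathbb R^n\to\mathbb R^l$ is affine, and $\boldsymbol g:\mathbb R^n\to\mathbb R^m$. Assumption A: $\mathcal X$ is nonempty, closed and convex; $c$ and each component of $\boldsymbol g$ are convex, twice continuously differentiable, with locally Lipschitz gradients on $\mathcal X$; $\boldsymbol h$ is affine; (GP) is feasible and Slater's condition holds. Lagrangian: $\mathcal L(\boldsymbol x,\boldsymbol\lambda,\boldsymbol\sigma)=c(\boldsymbol x)+\boldsymbol\lambda^\top\boldsymbol h(\boldsymbol x)+\boldsymbol\sigma^\top\boldsymbol g(\boldsymbol x)$. Let $\boldsymbol z=(\boldsymbol x,\boldsymbol\lambda,\boldsymbol\sigma)$, $\mathcal Z=\mathcal X\times\mathbb R^l\times\mathbb R^m_{\ge0}$, and $\boldsymbol\Omega(\boldsymbol z)=(\nabla_{\boldsymbol x}\mathcal L,\,-\nabla_{\boldsymbol\lambda}\mathcal L,\,-\nabla_{\boldsymbol\sigma}\mathcal L)=(\nabla c(\boldsymbol x)+\nabla\boldsymbol h(\boldsymbol x)^\top\boldsymbol\lambda+\nabla\boldsymbol g(\boldsymbol x)^\top\boldsymbol\sigma,\,-\boldsymbol h(\boldsymbol x),\,-\boldsymbol g(\boldsymbol x))$. $\mathrm{Proj}_{\mathcal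 Z}$ denotes Euclidean projection onto $\mathcal Z$. *)

theory Defs
  imports "HOL-Analysis.Analysis"
begin

definition C2_with_grad :: "('a::euclidean_space \<Rightarrow> real) \<Rightarrow> ('a \<Rightarrow> 'a) \<Rightarrow> bool" where
  "C2_with_grad f gf \<longleftrightarrow>
     (\<forall>x. (f has_derivative (\<lambda>v. gf x \<bullet> v)) (at x)) \<and>
     (\<exists>D :: 'a \<Rightarrow> ('a \<Rightarrow>\<^sub>L 'a).
        (\<forall>x. (gf has_derivative blinfun_apply (D x)) (at x)) \<and> continuous_on UNIV D)"

definition loc_lipschitz_on :: "'a::metric_space set \<Rightarrow> ('a \<Rightarrow> 'b::metric_space) \<Rightarrow> bool" where
  "loc_lipschitz_on X F \<longleftrightarrow>
     (\<forall>x\<in>X. \<exists>e>0. \<exists>L. \<forall>y\<in>ball x e \<inter> X. \<forall>w\<in>ball x e \<inter> X. dist (F y) (F w) \<le> L * dist y w)"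

definition nonneg :: "real^'m \<Rightarrow> bool" where
  "nonneg s \<longleftrightarrow> (\<forall>i. 0 \<le> s $ i)"

definition lagr :: "(real^'n \<Rightarrow> real) \<Rightarrow> (real^'n \<Rightarrow> real^'l) \<Rightarrow> (real^'n \<Rightarrow> real^'m)
                    \<Rightarrow> real^'n \<Rightarrow> real^'l \<Rightarrow> real^'m \<Rightarrow> real" where
  "lagr c h g x lam sig = c x + lam \<bullet> h x + sig \<bullet> g x"

definition saddle_point :: "(real^'n) set \<Rightarrow> (real^'n \<Rightarrow> real) \<Rightarrow> (real^'n \<Rightarrow> real^'l)
      \<Rightarrow> (real^'n \<Rightarrow> real^'m) \<Rightarrow> (real^'n) \<times> (real^'l) \<times> (real^'m) \<Rightarrow> bool" where
  "saddle_point X c h g z \<longleftrightarrow> (case z of (xs, ls, ss) \<Rightarrow>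
      xs \<in> X \<and> nonneg ss \<and>
      (\<forall>lam sig. nonneg sig \<longrightarrow> lagr c h g xs lam sig \<le> lagr c h g xs ls ss) \<and>
      (\<forall>x\<in>X. lagr c h g xs ls ss \<le> lagr c h g x ls ss))"

definition Zset :: "(real^'n) set \<Rightarrow> ((real^'n) \<times> (real^'l) \<times> (real^'m)) set" where
  "Zset X = X \<times> UNIV \<times> {s. nonneg s}"

text \<open>Omega(z) = (grad c + grad h^T lambda + grad g^T sigma, -h x, -g x), with gh j, gg i the
  gradients of the components h_j, g_i.\<close>
definition Omega :: "(real^'n \<Rightarrow> real^'n) \<Rightarrow> (real^'n \<Rightarrow> real^'l) \<Rightarrow> ('l \<Rightarrow> real^'n \<Rightarrow> real^'n)
      \<Rightarrow> (real^'n \<Rightarrow> real^'m) \<Rightarrow> ('m \<Rightarrow> real^'n \<Rightarrow> real^'n)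
      \<Rightarrow> (real^'n) \<times> (real^'l) \<times> (real^'m) \<Rightarrow> (real^'n) \<times> (real^'l) \<times> (real^'m)" where
  "Omega gc h gh g gg z = (case z of (x, lam, sig) \<Rightarrow>
      (gc x + (\<Sum>j\<in>UNIV. lam $ j *\<^sub>R gh j x) + (\<Sum>i\<in>UNIV. sig $ i *\<^sub>R gg i x),
       - h x, - g x))"

end

theory Submission
  imports Defs
begin


lemma line_deriv:
  fixes f :: "'a::real_normed_vector \<Rightarrow> 'b::real_normed_vector"
  assumes "(f has_derivative f') (at x)"
  shows "((\<lambda>t. f (x + t *\<^sub>R d)) has_derivative (\<lambda>t. t *\<^sub>R f' d)) (at 0)"
proof -
  have l: "linear f'" using assms has_derivative_linear by blast
  have "((\<lambda>t. x + t *\<^sub>R d) has_derivative (\<lambda>t. t *\<^sub>R d)) (at 0)"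
    by (auto intro!: derivative_eq_intros)
  moreover have "(f has_derivative f') (at (x + 0 *\<^sub>R d))" using assms by simp
  ultimately have "((\<lambda>t. f (x + t *\<^sub>R d)) has_derivative (\<lambda>t. f' (t *\<^sub>R d))) (at 0)"
    using has_derivative_compose[of "\<lambda>t. x + t *\<^sub>R d"] by blast
  then show ?thesis using linear_scale[OF l] by simp
qed

lemma conv_grad:
  fixes f :: "'a::real_normed_vector \<Rightarrow> real"
  assumes cf: "convex_on X f" and x: "x\<in>X" and x': "x'\<in>X" and df: "(f has_derivative f') (at x)"
  shows "f x + f' (x' - x) \<le> f x'"
proof (rule ccontr)
  assume "\<not> ?thesis"
  then have pos: "0 < f' (x' - x) - (f x' - f x)" by simp
  define \<psi> where "\<psi> t = f (x + t *\<^sub>R (x' - x)) - t * (f x' - f x)" for t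
  have "((\<lambda>t. f (x + t *\<^sub>R (x' - x))) has_derivative (\<lambda>t. t *\<^sub>R f' (x' - x))) (at 0)"
    by (rule line_deriv[OF df])
  then have "(\<psi> has_derivative (\<lambda>t. t * (f' (x' - x) - (f x' - f x)))) (at 0)"
    unfolding \<psi>_def by (auto intro!: derivative_eq_intros simp: algebra_simps)
  then have "DERIV \<psi> 0 :> (f' (x' - x) - (f x' - f x))"
    by (simp add: has_field_derivative_def mult.commute[of _ t for t] mult_commute_abs)
  from DERIV_pos_inc_right[OF this pos] obtain d where d: "d > 0" "\<And>h. h > 0 \<Longrightarrow> h < d \<Longrightarrow> \<psi> 0 < \<psi> (0 + h)"
    by blast
  define h where "h = min (d/2) 1"
  have h: "0 < h" "h < d" "h \<le> 1" using d unfolding h_def by auto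
  have "\<psi> 0 < \<psi> h" using d(2)[OF h(1,2)] by simp
  moreover have "f ((1 - h) *\<^sub>R x + h *\<^sub>R x') \<le> (1 - h) * f x + h * f x'"
    using convex_onD[OF cf] h x x' by auto
  moreover have "(1 - h) *\<^sub>R x + h *\<^sub>R x' = x + h *\<^sub>R (x' - x)" by (simp add: algebra_simps)
  ultimately show False unfolding \<psi>_def by (simp add: algebra_simps)
qed

lemma mono_psd:
  fixes F :: "'a::real_inner \<Rightarrow> 'a"
  assumes cS: "convex S" and z: "z \<in> S" and w: "w \<in> S"
    and mono: "\<forall>a\<in>S. \<forall>b\<in>S. 0 \<le> (F a - F b) \<bullet> (a - b)"
    and dF: "(F has_derivative F') (at z)"
  shows "0 \<le> F' (w - z) \<bullet> (w - z)"
proof (rule ccontr)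
  assume "\<not> ?thesis"
  then have neg: "F' (w - z) \<bullet> (w - z) < 0" by simp
  define \<psi> where "\<psi> t = (F (z + t *\<^sub>R (w - z)) - F z) \<bullet> (w - z)" for t
  have "((\<lambda>t. F (z + t *\<^sub>R (w - z))) has_derivative (\<lambda>t. t *\<^sub>R F' (w - z))) (at 0)"
    by (rule line_deriv[OF dF])
  then have "(\<psi> has_derivative (\<lambda>t. t * (F' (w - z) \<bullet> (w - z)))) (at 0)"
    unfolding \<psi>_def by (auto intro!: derivative_eq_intros simp: algebra_simps)
  then have "DERIV \<psi> 0 :> (F' (w - z) \<bullet> (w - z))"
    by (simp add: has_field_derivative_def mult.commute[of _ t for t] mult_commute_abs)
  from DERIV_neg_dec_right[OF this neg] obtain d where d: "d > 0" "\<And>h. h > 0 \<Longrightarrow> h < d \<Longrightarrow> \<psi> 0 > \<psi> (0 + h)"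
    by blast
  define h where "h = min (d/2) 1"
  have h: "0 < h" "h < d" "h \<le> 1" using d unfolding h_def by auto
  have "\<psi> 0 > \<psi> h" using d(2)[OF h(1,2)] by simp
  then have lt: "\<psi> h < 0" unfolding \<psi>_def by simp
  have "(1 - h) *\<^sub>R z + h *\<^sub>R w \<in> S" using convexD_alt[OF cS z w] h by auto
  moreover have "(1 - h) *\<^sub>R z + h *\<^sub>R w = z + h *\<^sub>R (w - z)" by (simp add: algebra_simps)
  ultimately have "z + h *\<^sub>R (w - z) \<in> S" by simp
  from mono[rule_format, OF this z] have "0 \<le> (F (z + h *\<^sub>R (w - z)) - F z) \<bullet> (h *\<^sub>R (w - z))"
    by simp
  then have "0 \<le> h * \<psi> h" unfolding \<psi>_def by simp
  with h lt show False by (simp add: mult_less_0_iff zero_le_mult_iff)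
qed

lemma alg_id:
  fixes z zs p u w :: "'a::real_inner" and a :: real
  shows "((z - zs) \<bullet> (p - z) + a\<^sup>2 * (u \<bullet> w) - ((z - a *\<^sub>R u) - p) \<bullet> ((p - z) - a *\<^sub>R w)) + a * ((z - zs) \<bullet> u)
    = ((z - a *\<^sub>R u) - p) \<bullet> (zs - p) - a * (w \<bullet> (p - z))"
  by (simp add: inner_diff_left inner_diff_right inner_commute power2_eq_square algebra_simps)



lemma dist2_est:
  fixes S :: "'a::euclidean_space set"
  assumes cS: "convex S" and clS: "closed S" and ne: "S \<noteq> {}"
  shows "\<bar>(norm (y + h - closest_point S (y + h)))\<^sup>2 - (norm (y - closest_point S y))\<^sup>2
          - 2 * ((y - closest_point S y) \<bullet> h)\<bar> \<le> 5 * (norm h)\<^sup>2"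
proof -
  define p where "p = closest_point S y"
  define q where "q = closest_point S (y + h)"
  define r where "r = y - p"
  define s where "s = y + h - q"
  have pS: "p \<in> S" and qS: "q \<in> S" unfolding p_def q_def using closest_point_in_set[OF clS ne] by auto
  have up: "dist (y + h) q \<le> dist (y + h) p" unfolding q_def using closest_point_le[OF clS pS] .
  have lo: "dist y p \<le> dist y q" unfolding p_def using closest_point_le[OF clS qS] .
  have lip: "norm (q - p) \<le> norm h"
    using closest_point_lipschitz[OF cS clS ne, of "y + h" y] unfolding p_def q_def by (simp add: dist_norm)
  have up2: "(norm s)\<^sup>2 \<le> (norm (r + h))\<^sup>2"
    using up unfolding s_def r_def dist_norm by (simp add: algebra_simps)
  have lo2: "(norm r)\<^sup>2 \<le> (norm (s - h))\<^sup>2"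
    using lo unfolding s_def r_def dist_norm by (simp add: algebra_simps)
  have sr: "s - r = h - (q - p)" unfolding s_def r_def by (simp add: algebra_simps)
  have nsr: "norm (s - r) \<le> 2 * norm h" unfolding sr using norm_triangle_ineq4[of h "q - p"] lip by simp
  have cs: "\<bar>(s - r) \<bullet> h\<bar> \<le> norm (s - r) * norm h" by (rule Cauchy_Schwarz_ineq2)
  have e1: "(norm (r + h))\<^sup>2 = (norm r)\<^sup>2 + 2 * (r \<bullet> h) + (norm h)\<^sup>2"
    by (simp add: power2_norm_eq_inner inner_add_left inner_add_right inner_commute)
  have e2: "(norm (s - h))\<^sup>2 = (norm s)\<^sup>2 - 2 * (s \<bullet> h) + (norm h)\<^sup>2"
    by (simp add: power2_norm_eq_inner inner_diff_left inner_diff_right inner_commute)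
  have e3: "(s - r) \<bullet> h = s \<bullet> h - r \<bullet> h" by (simp add: inner_diff_left)
  have "norm (s - r) * norm h \<le> 2 * (norm h)\<^sup>2"
    using mult_right_mono[OF nsr norm_ge_zero[of h]] by (simp add: power2_eq_square)
  then have "\<bar>(norm s)\<^sup>2 - (norm r)\<^sup>2 - 2 * (r \<bullet> h)\<bar> \<le> 5 * (norm h)\<^sup>2"
    using up2 lo2 e1 e2 e3 cs by (simp add: abs_le_iff)
  then show ?thesis unfolding s_def r_def p_def q_def by (simp add: algebra_simps)
qed

lemma dist2_deriv:
  fixes S :: "'a::euclidean_space set"
  assumes cS: "convex S" and clS: "closed S" and ne: "S \<noteq> {}"
  shows "((\<lambda>y. (norm (y - closest_point S y))\<^sup>2) has_derivative (\<lambda>v. 2 * ((y - closest_point S y) \<bullet> v))) (at y)"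
  unfolding has_derivative_at
proof
  show "bounded_linear (\<lambda>v. 2 * ((y - closest_point S y) \<bullet> v))"
    by (intro bounded_linear_intros)
  show "(\<lambda>h. norm ((norm (y + h - closest_point S (y + h)))\<^sup>2 - (norm (y - closest_point S y))\<^sup>2
          - 2 * ((y - closest_point S y) \<bullet> h)) / norm h) \<midarrow>0\<rightarrow> 0"
  proof (rule Lim_null_comparison)
    show "\<forall>\<^sub>F h in at 0. norm (norm ((norm (y + h - closest_point S (y + h)))\<^sup>2 - (norm (y - closest_point S y))\<^sup>2
          - 2 * ((y - closest_point S y) \<bullet> h)) / norm h) \<le> 5 * norm h"
    proof (rule always_eventually, rule allI)
      fix h :: 'a
      show "norm (norm ((norm (y + h - closest_point S (y + h)))\<^sup>2 - (norm (y - closest_point S y))\<^sup>2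
          - 2 * ((y - closest_point S y) \<bullet> h)) / norm h) \<le> 5 * norm h"
      proof (cases "h = 0")
        case True then show ?thesis by simp
      next
        case False
        then have "norm h > 0" by simp
        moreover have "5 * (norm h)\<^sup>2 = (5 * norm h) * norm h" by (simp add: power2_eq_square)
        ultimately show ?thesis using dist2_est[OF assms, of y h]
          by (simp add: divide_le_eq)
      qed
    qed
    show "((\<lambda>h. 5 * norm h) \<longlongrightarrow> 0) (at (0::'a))"
      by (auto intro!: tendsto_eq_intros)
  qed
qed



theorem lemma2:
  fixes X :: "(real^'n) set"
    and c :: "real^'n \<Rightarrow> real" and gc :: "real^'n \<Rightarrow> real^'n"
    and h :: "real^'n \<Rightarrow> real^'l" and gh :: "'l \<Rightarrow> real^'n \<Rightarrow> real^'n"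
    and g :: "real^'n \<Rightarrow> real^'m" and gg :: "'m \<Rightarrow> real^'n \<Rightarrow> real^'n"
    and \<alpha> :: real
    and zs :: "(real^'n) \<times> (real^'l) \<times> (real^'m)"
    and Z :: "((real^'n) \<times> (real^'l) \<times> (real^'m)) set"
    and \<Omega> :: "(real^'n) \<times> (real^'l) \<times> (real^'m) \<Rightarrow> (real^'n) \<times> (real^'l) \<times> (real^'m)"
    and P :: "(real^'n) \<times> (real^'l) \<times> (real^'m) \<Rightarrow> (real^'n) \<times> (real^'l) \<times> (real^'m)"
    and F :: "(real^'n) \<times> (real^'l) \<times> (real^'m) \<Rightarrow> (real^'n) \<times> (real^'l) \<times> (real^'m)"
    and V :: "(real^'n) \<times> (real^'l) \<times> (real^'m) \<Rightarrow> real"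
  assumes X_ne: "X \<noteq> {}" and X_closed: "closed X" and X_convex: "convex X"
    and c_convex: "convex_on X c" and c_C2: "C2_with_grad c gc" and c_lip: "loc_lipschitz_on X gc"
    and g_convex: "\<forall>i. convex_on X (\<lambda>x. g x $ i)"
    and g_C2: "\<forall>i. C2_with_grad (\<lambda>x. g x $ i) (gg i)"
    and g_lip: "\<forall>i. loc_lipschitz_on X (gg i)"
    and h_affine: "\<exists>(A :: real^'n^'l) b. \<forall>x. h x = A *v x + b"
    and h_grad: "\<forall>j x. ((\<lambda>y. h y $ j) has_derivative (\<lambda>v. gh j x \<bullet> v)) (at x)"
    and feasible: "\<exists>x\<in>X. h x = 0 \<and> (\<forall>i. g x $ i \<le> 0)"
    and slater: "\<exists>x\<in>rel_interior X. h x = 0 \<and> (\<forall>i. g x $ i < 0)"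
    and alpha_pos: "\<alpha> > 0"
    and saddle: "saddle_point X c h g zs"
  defines "Z \<equiv> Zset X"
    and "\<Omega> \<equiv> Omega gc h gh g gg"
    and "P \<equiv> (\<lambda>z. closest_point Z (z - \<alpha> *\<^sub>R \<Omega> z))"
    and "F \<equiv> (\<lambda>z. P z - z)"
    and "V \<equiv> (\<lambda>z. (1/2) * (norm (z - zs))\<^sup>2 + \<alpha> * ((z - P z) \<bullet> \<Omega> z)
                    - (1/2) * (norm (z - P z))\<^sup>2)"
  shows "(\<forall>z\<in>Z. V z \<ge> (1/2) * ((norm (z - P z))\<^sup>2 + (norm (z - zs))\<^sup>2)
                \<and> (1/2) * ((norm (z - P z))\<^sup>2 + (norm (z - zs))\<^sup>2) \<ge> 0)
       \<and> (\<exists>gV. (\<forall>z\<in>Z. (V has_derivative (\<lambda>v. gV z \<bullet> v)) (at z))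
               \<and> continuous_on Z gV
               \<and> (\<forall>z\<in>Z. gV z \<bullet> F z \<le> - \<alpha> * ((z - zs) \<bullet> \<Omega> z)
                        \<and> - \<alpha> * ((z - zs) \<bullet> \<Omega> z) \<le> 0))"
proof -
  define Lx where "Lx x l s = gc x + (\<Sum>j\<in>UNIV. l $ j *\<^sub>R gh j x) + (\<Sum>i\<in>UNIV. s $ i *\<^sub>R gg i x)"
    for x :: "real^'n" and l :: "real^'l" and s :: "real^'m"
  have Om: "\<Omega> (x, l, s) = (Lx x l s, - h x, - g x)" for x l s
    unfolding \<Omega>_def Omega_def Lx_def by simp
  have nonneg_closed: "closed {s :: real^'m. nonneg s}"
  proof -
    have "{s :: real^'m. nonneg s} = (\<Inter>i. {s. 0 \<le> s $ i})" unfolding nonneg_def by auto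
    moreover have "closed {s :: real^'m. 0 \<le> s $ i}" for i
      by (intro closed_Collect_le continuous_intros)
    ultimately show ?thesis by auto
  qed
  have nonneg_convex: "convex {s :: real^'m. nonneg s}"
    unfolding nonneg_def convex_def by auto
  have Zcl: "closed Z" unfolding Z_def Zset_def
    using X_closed nonneg_closed by (intro closed_Times) auto
  have Zcv: "convex Z" unfolding Z_def Zset_def
    using X_convex nonneg_convex by (intro convex_Times) auto
  have Zne: "Z \<noteq> {}"
  proof -
    obtain x0 where "x0 \<in> X" using X_ne by blast
    then have "(x0, 0, 0) \<in> Z" unfolding Z_def Zset_def by (auto simp: nonneg_def)
    then show ?thesis by blast
  qed
  obtain xs ls ss where zs_eq: "zs = (xs, ls, ss)" by (cases zs) auto
  have sad: "xs \<in> X" "nonneg ss"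
      "\<And>lam sig. nonneg sig \<Longrightarrow> lagr c h g xs lam sig \<le> lagr c h g xs ls ss"
      "\<And>x. x \<in> X \<Longrightarrow> lagr c h g xs ls ss \<le> lagr c h g x ls ss"
    using saddle unfolding saddle_point_def zs_eq by auto
  have zsZ: "zs \<in> Z" unfolding Z_def Zset_def zs_eq using sad by auto
  obtain A b where hA: "\<And>x. h x = A *v x + b" using h_affine by blast
  have hj: "h x $ j = A $ j \<bullet> x + b $ j" for x j
    by (simp add: hA matrix_vector_mul_component)
  have gh_eq: "gh j x = A $ j" for j x
  proof -
    have d1: "((\<lambda>y. h y $ j) has_derivative (\<lambda>v. gh j x \<bullet> v)) (at x)" using h_grad by blast
    have d2: "((\<lambda>y. h y $ j) has_derivative (\<lambda>v. A $ j \<bullet> v)) (at x)"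
      unfolding hj by (auto intro!: derivative_eq_intros)
    have "(\<lambda>v. gh j x \<bullet> v) = (\<lambda>v. A $ j \<bullet> v)" using has_derivative_unique[OF d1 d2] .
    then have "gh j x \<bullet> (gh j x - A $ j) = A $ j \<bullet> (gh j x - A $ j)" by metis
    then have "(gh j x - A $ j) \<bullet> (gh j x - A $ j) = 0" by (simp add: inner_diff_left)
    then show ?thesis by simp
  qed
  obtain Dc where dcf: "\<And>x. (c has_derivative (\<lambda>v. gc x \<bullet> v)) (at x)"
     and dgc: "\<And>x. (gc has_derivative blinfun_apply (Dc x)) (at x)" and cDc: "continuous_on UNIV Dc"
    using c_C2 unfolding C2_with_grad_def by blast
  have "\<forall>i. \<exists>D. (\<forall>x. ((\<lambda>x. g x $ i) has_derivative (\<lambda>v. gg i x \<bullet> v)) (at x)) \<and>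
          (\<forall>x. (gg i has_derivative blinfun_apply (D x)) (at x)) \<and> continuous_on UNIV D"
    using g_C2 unfolding C2_with_grad_def by blast
  then obtain Dg where dgf: "\<And>i x. ((\<lambda>x. g x $ i) has_derivative (\<lambda>v. gg i x \<bullet> v)) (at x)"
     and dgg: "\<And>i x. (gg i has_derivative blinfun_apply (Dg i x)) (at x)"
     and cDg: "\<And>i. continuous_on UNIV (Dg i)"
    by metis
  have K1: "lagr c h g x l s + Lx x l s \<bullet> (x' - x) \<le> lagr c h g x' l s"
    if x: "x \<in> X" and x': "x' \<in> X" and s: "nonneg s" for x x' l s
  proof -
    have c1: "c x + gc x \<bullet> (x' - x) \<le> c x'"
      using conv_grad[OF c_convex x x' dcf] .
    have g1: "g x $ i + gg i x \<bullet> (x' - x) \<le> g x' $ i" for i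
      using conv_grad[OF g_convex[rule_format, of i] x x' dgf] .
    have h1: "h x' $ j = h x $ j + A $ j \<bullet> (x' - x)" for j
      by (simp add: hj inner_diff_right)
    have e1: "lagr c h g x l s = c x + (\<Sum>j\<in>UNIV. l $ j * h x $ j) + (\<Sum>i\<in>UNIV. s $ i * g x $ i)" for x
      unfolding lagr_def inner_vec_def by simp
    have e2: "Lx x l s \<bullet> (x' - x) = gc x \<bullet> (x' - x) + (\<Sum>j\<in>UNIV. l $ j * (A $ j \<bullet> (x' - x)))
              + (\<Sum>i\<in>UNIV. s $ i * (gg i x \<bullet> (x' - x)))"
      unfolding Lx_def gh_eq by (simp add: inner_add_left inner_sum_left)
    have s1: "(\<Sum>j\<in>UNIV. l $ j * h x' $ j) = (\<Sum>j\<in>UNIV. l $ j * h x $ j) + (\<Sum>j\<in>UNIV. l $ j * (A $ j \<bullet> (x' - x)))"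
      unfolding h1 by (simp add: distrib_left sum.distrib)
    have s2: "(\<Sum>i\<in>UNIV. s $ i * g x $ i) + (\<Sum>i\<in>UNIV. s $ i * (gg i x \<bullet> (x' - x))) \<le> (\<Sum>i\<in>UNIV. s $ i * g x' $ i)"
      unfolding sum.distrib[symmetric] distrib_left[symmetric]
      using s g1 by (intro sum_mono mult_left_mono) (auto simp: nonneg_def)
    show ?thesis unfolding e1 e2 using c1 s1 s2 by linarith
  qed
  have Mono: "0 \<le> (\<Omega> z1 - \<Omega> z2) \<bullet> (z1 - z2)" if z1: "z1 \<in> Z" and z2: "z2 \<in> Z" for z1 z2
  proof -
    obtain x1 l1 s1 where z1e: "z1 = (x1, l1, s1)" by (cases z1) auto
    obtain x2 l2 s2 where z2e: "z2 = (x2, l2, s2)" by (cases z2) auto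
    have m: "x1 \<in> X" "x2 \<in> X" "nonneg s1" "nonneg s2" using z1 z2 unfolding z1e z2e Z_def Zset_def by auto
    have a1: "lagr c h g x1 l1 s1 + Lx x1 l1 s1 \<bullet> (x2 - x1) \<le> lagr c h g x2 l1 s1" using K1 m by blast
    have a2: "lagr c h g x2 l2 s2 + Lx x2 l2 s2 \<bullet> (x1 - x2) \<le> lagr c h g x1 l2 s2" using K1 m by blast
    show ?thesis using a1 a2 unfolding z1e z2e Om lagr_def
      by (simp add: inner_diff_left inner_diff_right inner_commute algebra_simps)
  qed
  have VI: "0 \<le> (z - zs) \<bullet> \<Omega> z" if z: "z \<in> Z" for z
  proof -
    obtain x l s where ze: "z = (x, l, s)" by (cases z) auto
    have m: "x \<in> X" "nonneg s" using z unfolding ze Z_def Zset_def by auto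
    have a1: "lagr c h g x l s + Lx x l s \<bullet> (xs - x) \<le> lagr c h g xs l s" using K1 m sad by blast
    have a2: "lagr c h g xs l s \<le> lagr c h g xs ls ss" using sad m by blast
    have a3: "lagr c h g xs ls ss \<le> lagr c h g x ls ss" using sad m by blast
    show ?thesis using a1 a2 a3 unfolding ze zs_eq Om lagr_def
      by (simp add: inner_diff_left inner_diff_right inner_commute algebra_simps)
  qed
  have Lx_eq: "Lx x l s = gc x + (\<Sum>j\<in>UNIV. l $ j *\<^sub>R A $ j) + (\<Sum>i\<in>UNIV. s $ i *\<^sub>R gg i x)" for x l s
    unfolding Lx_def gh_eq ..
  have OmF: "\<Omega> = (\<lambda>z. (gc (fst z) + (\<Sum>j\<in>UNIV. fst (snd z) $ j *\<^sub>R A $ j)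
      + (\<Sum>i\<in>UNIV. snd (snd z) $ i *\<^sub>R gg i (fst z)),
      - (A *v fst z + b), - (\<Sum>i\<in>UNIV. (g (fst z) $ i) *\<^sub>R axis i (1::real))))"
  proof
    fix z :: "(real^'n) \<times> (real^'l) \<times> (real^'m)"
    obtain x l s where ze: "z = (x, l, s)" by (cases z) auto
    have "g x = (\<Sum>i\<in>UNIV. (g x $ i) *\<^sub>R axis i (1::real))"
      using basis_expansion[of "g x"] by (simp add: scalar_mult_eq_scaleR)
    then show "\<Omega> z = (gc (fst z) + (\<Sum>j\<in>UNIV. fst (snd z) $ j *\<^sub>R A $ j)
      + (\<Sum>i\<in>UNIV. snd (snd z) $ i *\<^sub>R gg i (fst z)),
      - (A *v fst z + b), - (\<Sum>i\<in>UNIV. (g (fst z) $ i) *\<^sub>R axis i (1::real)))"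
      unfolding ze Om Lx_eq hA by simp
  qed
  define dOm where "dOm z v = (blinfun_apply (Dc (fst z)) (fst v) + (\<Sum>j\<in>UNIV. fst (snd v) $ j *\<^sub>R A $ j)
      + (\<Sum>i\<in>UNIV. snd (snd v) $ i *\<^sub>R gg i (fst z) + snd (snd z) $ i *\<^sub>R blinfun_apply (Dg i (fst z)) (fst v)),
      - (A *v fst v), - (\<Sum>i\<in>UNIV. (gg i (fst z) \<bullet> fst v) *\<^sub>R axis i (1::real)))"
    for z v :: "(real^'n) \<times> (real^'l) \<times> (real^'m)"
  have dOmega: "(\<Omega> has_derivative dOm z) (at z)" for z
  proof -
    have fz: "((\<lambda>z::(real^'n) \<times> (real^'l) \<times> (real^'m). fst z) has_derivative (\<lambda>v. fst v)) (at z)"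
      by (auto intro!: derivative_eq_intros)
    have d1: "((\<lambda>z. gc (fst z)) has_derivative (\<lambda>v. blinfun_apply (Dc (fst z)) (fst v))) (at z)"
      using has_derivative_compose[OF fz dgc] .
    have d2: "((\<lambda>z. gg i (fst z)) has_derivative (\<lambda>v. blinfun_apply (Dg i (fst z)) (fst v))) (at z)" for i
      using has_derivative_compose[OF fz dgg] .
    have d3: "((\<lambda>z. g (fst z) $ i) has_derivative (\<lambda>v. gg i (fst z) \<bullet> fst v)) (at z)" for i
      using has_derivative_compose[OF fz dgf] .
    have d4: "((\<lambda>z::(real^'n) \<times> (real^'l) \<times> (real^'m). A *v fst z + b) has_derivative (\<lambda>v. A *v fst v)) (at z)"
    proof -
      have "bounded_linear (\<lambda>v::(real^'n) \<times> (real^'l) \<times> (real^'m). A *v fst v)"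
        by (intro bounded_linear_compose[OF matrix_vector_mul_bounded_linear] bounded_linear_fst)
      then have "((\<lambda>v::(real^'n) \<times> (real^'l) \<times> (real^'m). A *v fst v) has_derivative (\<lambda>v. A *v fst v)) (at z)"
        by (rule bounded_linear_imp_has_derivative)
      then show ?thesis by (auto intro!: derivative_eq_intros)
    qed
    have d5: "((\<lambda>z::(real^'n) \<times> (real^'l) \<times> (real^'m). fst (snd z) $ j) has_derivative (\<lambda>v. fst (snd v) $ j)) (at z)" for j
      by (intro bounded_linear_imp_has_derivative bounded_linear_compose[OF bounded_linear_vec_nth]
          bounded_linear_compose[OF bounded_linear_fst] bounded_linear_snd)
    have d6: "((\<lambda>z::(real^'n) \<times> (real^'l) \<times> (real^'m). snd (snd z) $ j) has_derivative (\<lambda>v. snd (snd v) $ j)) (at z)" for j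
      by (intro bounded_linear_imp_has_derivative bounded_linear_compose[OF bounded_linear_vec_nth]
          bounded_linear_compose[OF bounded_linear_snd] bounded_linear_snd)
    show ?thesis unfolding OmF dOm_def
      apply (rule has_derivative_eq_rhs)
       apply (rule has_derivative_Pair)
       apply (rule has_derivative_add)
       apply (rule has_derivative_add)
       apply (rule d1)
       apply (rule has_derivative_sum)
       apply (rule has_derivative_scaleR)
       apply (rule d5)
       apply (rule has_derivative_const)
       apply (rule has_derivative_sum)
       apply (rule has_derivative_scaleR)
       apply (rule d6)
       apply (rule d2)
       apply (rule has_derivative_Pair)
       apply (rule has_derivative_minus)
       apply (rule d4)
       apply (rule has_derivative_minus)
       apply (rule has_derivative_sum)
       apply (rule has_derivative_scaleR)
       apply (rule d3)
      apply (rule has_derivative_const)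
      apply (simp add: algebra_simps)
      done
  qed
  have contgg: "continuous_on UNIV (gg i)" for i
    by (intro continuous_at_imp_continuous_on ballI has_derivative_continuous[OF dgg])
  have contOm: "continuous_on UNIV \<Omega>"
    by (intro continuous_at_imp_continuous_on ballI has_derivative_continuous[OF dOmega])
  have contdOm: "continuous_on UNIV (\<lambda>z. dOm z v)" for v
  proof -
    have c1: "continuous_on UNIV (\<lambda>z::(real^'n) \<times> (real^'l) \<times> (real^'m). blinfun_apply (Dc (fst z)) w)" for w
      by (rule blinfun.continuous_on[OF continuous_on_compose2[OF cDc continuous_on_fst] continuous_on_const]) auto
    have c2: "continuous_on UNIV (\<lambda>z::(real^'n) \<times> (real^'l) \<times> (real^'m). blinfun_apply (Dg i (fst z)) w)" for w i
      by (rule blinfun.continuous_on[OF continuous_on_compose2[OF cDg continuous_on_fst] continuous_on_const]) auto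
    have c3: "continuous_on UNIV (\<lambda>z::(real^'n) \<times> (real^'l) \<times> (real^'m). gg i (fst z))" for i
      by (rule continuous_on_compose2[OF contgg continuous_on_fst]) auto
    have c4: "continuous_on UNIV (\<lambda>z::(real^'n) \<times> (real^'l) \<times> (real^'m). snd (snd z) $ i)" for i
      by (intro linear_continuous_on bounded_linear_compose[OF bounded_linear_vec_nth]
          bounded_linear_compose[OF bounded_linear_snd] bounded_linear_snd)
    show ?thesis unfolding dOm_def
      by (intro continuous_on_Pair continuous_on_add continuous_on_sum continuous_on_scaleR continuous_on_minus
         continuous_on_const c1 c2 c3 c4 continuous_on_inner)
  qed
  define y where "y z = z - \<alpha> *\<^sub>R \<Omega> z" for z
  have Py: "P z = closest_point Z (y z)" for z unfolding P_def y_def ..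
  have Vrew: "V z = (1/2) * ((z - zs) \<bullet> (z - zs)) + (1/2) * \<alpha>\<^sup>2 * (\<Omega> z \<bullet> \<Omega> z)
     - (1/2) * (norm (y z - closest_point Z (y z)))\<^sup>2" for z
  proof -
    have e: "y z - P z = (z - P z) - \<alpha> *\<^sub>R \<Omega> z" unfolding y_def by (simp add: algebra_simps)
    have "(norm ((z - P z) - \<alpha> *\<^sub>R \<Omega> z))\<^sup>2 = (norm (z - P z))\<^sup>2 - 2 * \<alpha> * ((z - P z) \<bullet> \<Omega> z) + \<alpha>\<^sup>2 * (\<Omega> z \<bullet> \<Omega> z)"
      by (simp only: power2_norm_eq_inner) (simp add: inner_diff_left inner_diff_right inner_commute power2_eq_square algebra_simps)
    then have "(norm (y z - P z))\<^sup>2 = (norm (z - P z))\<^sup>2 - 2 * \<alpha> * ((z - P z) \<bullet> \<Omega> z) + \<alpha>\<^sup>2 * (\<Omega> z \<bullet> \<Omega> z)"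
      unfolding e .
    then show ?thesis unfolding V_def Py[symmetric] by (simp add: power2_norm_eq_inner algebra_simps)
  qed
  define V' where "V' z v = (z - zs) \<bullet> v + \<alpha>\<^sup>2 * (\<Omega> z \<bullet> dOm z v) - (y z - P z) \<bullet> (v - \<alpha> *\<^sub>R dOm z v)" for z v
  have dV: "(V has_derivative V' z) (at z)" for z
  proof -
    have dy: "(y has_derivative (\<lambda>v. v - \<alpha> *\<^sub>R dOm z v)) (at z)"
      unfolding y_def by (intro has_derivative_diff has_derivative_ident has_derivative_scaleR_right dOmega)
    have dphi: "((\<lambda>z. (norm (y z - closest_point Z (y z)))\<^sup>2) has_derivative
        (\<lambda>v. 2 * ((y z - P z) \<bullet> (v - \<alpha> *\<^sub>R dOm z v)))) (at z)"
      using has_derivative_compose[OF dy dist2_deriv[OF Zcv Zcl Zne]] unfolding Py .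
    show ?thesis unfolding Vrew[abs_def] V'_def
      apply (rule has_derivative_eq_rhs)
       apply (rule has_derivative_diff)
        apply (rule has_derivative_add)
         apply (rule has_derivative_mult_right)
         apply (rule has_derivative_inner)
          apply (rule has_derivative_diff[OF has_derivative_ident has_derivative_const])
         apply (rule has_derivative_diff[OF has_derivative_ident has_derivative_const])
        apply (rule has_derivative_mult_right)
        apply (rule has_derivative_inner)
         apply (rule dOmega)
        apply (rule dOmega)
       apply (rule has_derivative_mult_right)
       apply (rule dphi)
      apply (simp add: fun_eq_iff inner_commute algebra_simps)
      done
  qed
  have linV: "linear (V' z)" for z using has_derivative_linear[OF dV] .
  define gV where "gV z = (\<Sum>b\<in>Basis. V' z b *\<^sub>R b)" for z
  have gVrep: "gV z \<bullet> v = V' z v" for z v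
  proof -
    have "V' z v = V' z (\<Sum>b\<in>Basis. (v \<bullet> b) *\<^sub>R b)" by (simp add: euclidean_representation)
    also have "\<dots> = (\<Sum>b\<in>Basis. (v \<bullet> b) * V' z b)"
      by (simp add: linear_sum[OF linV] linear_scale[OF linV])
    finally show ?thesis unfolding gV_def inner_sum_left inner_scaleR_left
      by (auto intro!: sum.cong simp: inner_commute)
  qed
  have contY: "continuous_on UNIV y" unfolding y_def[abs_def]
      by (intro continuous_on_diff continuous_on_id continuous_on_scaleR continuous_on_const contOm)
  have contP: "continuous_on UNIV P"
  proof -
    show ?thesis using contY unfolding Py[abs_def]
      by (rule continuous_on_compose2[OF continuous_on_closest_point[OF Zcv Zcl Zne]]) auto
  qed
  have contV': "continuous_on UNIV (\<lambda>z. V' z b)" for b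
    unfolding V'_def
    by (intro continuous_on_diff continuous_on_add continuous_on_inner continuous_on_mult_left
       continuous_on_id continuous_on_const contOm contdOm contP contY continuous_on_scaleR)
  have contgV: "continuous_on Z gV"
    unfolding gV_def
    by (rule continuous_on_subset[OF _ subset_UNIV]) (intro continuous_on_sum continuous_on_scaleR contV' continuous_on_const)
  have PZ: "P z \<in> Z" for z unfolding Py using closest_point_in_set[OF Zcl Zne] .
  have partA: "V z \<ge> (1/2) * ((norm (z - P z))\<^sup>2 + (norm (z - zs))\<^sup>2)" if z: "z \<in> Z" for z
  proof -
    have "(y z - P z) \<bullet> (z - P z) \<le> 0" unfolding Py using closest_point_dot[OF Zcv Zcl z] .
    then have "(z - P z) \<bullet> (z - P z) \<le> \<alpha> * ((z - P z) \<bullet> \<Omega> z)"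
      unfolding y_def by (simp add: inner_diff_left inner_diff_right inner_commute algebra_simps)
    then show ?thesis unfolding V_def by (simp add: power2_norm_eq_inner algebra_simps)
  qed
  have partB: "gV z \<bullet> F z \<le> - \<alpha> * ((z - zs) \<bullet> \<Omega> z)" if z: "z \<in> Z" for z
  proof -
    have psd: "0 \<le> dOm z (P z - z) \<bullet> (P z - z)"
      by (rule mono_psd[OF Zcv z PZ _ dOmega]) (use Mono in auto)
    have pd: "(y z - P z) \<bullet> (zs - P z) \<le> 0" unfolding Py using closest_point_dot[OF Zcv Zcl zsZ] .
    have alg: "V' z (P z - z) + \<alpha> * ((z - zs) \<bullet> \<Omega> z) = (y z - P z) \<bullet> (zs - P z) - \<alpha> * (dOm z (P z - z) \<bullet> (P z - z))"
      unfolding V'_def y_def using alg_id[of z zs "P z" \<alpha> "\<Omega> z" "dOm z (P z - z)"] by simp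
    have "0 \<le> \<alpha> * (dOm z (P z - z) \<bullet> (P z - z))" using psd alpha_pos by simp
    then show ?thesis unfolding F_def gVrep using alg pd by linarith
  qed
  show ?thesis
  proof (intro conjI ballI exI[of _ gV])
    fix z assume z: "z \<in> Z"
    show "V z \<ge> (1/2) * ((norm (z - P z))\<^sup>2 + (norm (z - zs))\<^sup>2)" using partA[OF z] .
    show "0 \<le> (1/2) * ((norm (z - P z))\<^sup>2 + (norm (z - zs))\<^sup>2)" by simp
    show "(V has_derivative (\<lambda>v. gV z \<bullet> v)) (at z)" unfolding gVrep using dV by (simp add: fun_eq_iff)
    show "gV z \<bullet> F z \<le> - \<alpha> * ((z - zs) \<bullet> \<Omega> z)" using partB[OF z] .
    show "- \<alpha> * ((z - zs) \<bullet> \<Omega> z) \<le> 0" using VI[OF z] alpha_pos by simp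
  next
    show "continuous_on Z gV" by (rule contgV)
  qed
qed

end
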